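(* Assume: (H1) there exist real numbers $M_1<M_2$ such that for every $u\in C^1$: $\int_0^T f(t,u(t),u'(t))\,dt\neq0$ whenever $\min_{[0,T]}u'\ge M_2$, and $\int_0^T f(t,u(t),u'(t))\,dt\neq0$ whenever $\max_{[0,T]}u'\le M_1$; (H2) there exists $c\in C$ such that $f(t,x,y)\ge c(t)$ for all $(t,x,y)\in[0,T]\times\mathbb{R}\times\mathbb{R}$, and $L+2\|c^-\|_{L^1}<a$, where $L=\max\{|\varphi(M_2)|,|\varphi(M_1)|\}$. Let $r=\max\{|\varphi^{-1}(L+2\|c^-\|_{L^1})|,\ |\varphi^{-1}(-L-2\|c^-\|_{L^1})|\}$. If $(\lambda,u)\in\Omega$ satisfies $u=M(\lambda,u)$, then $$\|\lambda H(N_f(u)-Q(N_f(u)))+\varphi(P(u))\|_\infty<L+2\|c^-\|_{L^1}\quad\text{and}\quad \|u\|_1<r(2+T).$$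
   Context: Let $T>0$, $a>0$, let $\varphi:\mathbb{R}\to(-a,a)$ be a homeomorphism with $\varphi(0)=0$, and let $f:[0,T]\times\mathbb{R}\times\mathbb{R}\to\mathbb{R}$ be continuous. $C=C([0,T],\mathbb{R})$ carries the sup norm $\|\cdot\|_\infty$; $C^1=C^1([0,T],\mathbb{R})$ carries the norm $\|u\|_1=\|u\|_\infty+\|u'\|_\infty$; $\|\cdot\|_{L^1}$ is the norm of $L^1([0,T])$, and $c^-=\max\{-c,0\}$. Define $N_f:C^1\to C$, $N_f(u)(t)=f(t,u(t),u'(t))$; $H:C\to C^1$, $H(v)(t)=\int_0^t v(s)\,ds$; $Q:C\to C$, $Q(v)(t)=\frac1T\int_0^T v(s)\,ds$ (a constant function); $P:C\to C$, $P(u)(t)=u(0)$ (a constant function). For $v\in C$ with $\|v\|_\infty<a$, $\varphi^{-1}(v)\in C$ denotes $t\mapsto\varphi^{-1}(v(t))$, and $\varphi(v)$ is defined pointwise similarly. Let $$\Omega=\{(\lambda,u)\in[0,1]\times C^1:\ \|\lambda H(N_f(u)-Q(N_f(u)))+\varphi(P(u))\|_\infty<a\},$$ and for $(\lambda,u)\in\Omega$ let $$M(\lambda,u)=P(u)+Q(N_f(u))+H\big(\varphi^{-1}[\lambda H(N_f(u)-Q(N_f(u)))+\varphi(P(u))]\big).$$ *)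

theory Defs
  imports "HOL-Analysis.Analysis"
begin

text \<open>Functions in C([0,T]) / C^1([0,T]) are represented as real functions;
 only their values on {0..T} matter. A C^1 function u is given together with
 its derivative u' (one-sided at the endpoints).\<close>

definition is_C1 :: "real \<Rightarrow> (real \<Rightarrow> real) \<Rightarrow> (real \<Rightarrow> real) \<Rightarrow> bool" where
  "is_C1 T u u' \<longleftrightarrow> (\<forall>t\<in>{0..T}. (u has_real_derivative u' t) (at t within {0..T}))
      \<and> continuous_on {0..T} u'"

definition supn :: "real \<Rightarrow> (real \<Rightarrow> real) \<Rightarrow> real" where
  "supn T v = (SUP t\<in>{0..T}. \<bar>v t\<bar>)"

definition Nf :: "(real \<Rightarrow> real \<Rightarrow> real \<Rightarrow> real) \<Rightarrow> (real \<Rightarrow> real) \<Rightarrow> (real \<Rightarrow> real) \<Rightarrow> real \<Rightarrow> real" where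
  "Nf f u u' t = f t (u t) (u' t)"

definition Hop :: "(real \<Rightarrow> real) \<Rightarrow> real \<Rightarrow> real" where
  "Hop v t = integral {0..t} v"

definition Qop :: "real \<Rightarrow> (real \<Rightarrow> real) \<Rightarrow> real \<Rightarrow> real" where
  "Qop T v t = integral {0..T} v / T"

definition Pop :: "(real \<Rightarrow> real) \<Rightarrow> real \<Rightarrow> real" where
  "Pop u t = u 0"

end

theory Submission
  imports Defs "HOL-Analysis.Analysis"
begin


lemma supn_ge:
  assumes "T \<ge> 0" "continuous_on {0..T} g" "t \<in> {0..T}"
  shows "\<bar>g t\<bar> \<le> supn T g"
proof -
  have "continuous_on {0..T} (\<lambda>t. \<bar>g t\<bar>)" using assms(2) by (intro continuous_intros)
  then obtain x0 where x0: "x0 \<in> {0..T}" "\<forall>y\<in>{0..T}. \<bar>g y\<bar> \<le> \<bar>g x0\<bar>"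
    using continuous_attains_sup[of "{0..T}" "\<lambda>t. \<bar>g t\<bar>"] assms(1) by auto
  have "bdd_above ((\<lambda>t. \<bar>g t\<bar>) ` {0..T})" using x0 by (auto intro!: bdd_aboveI2)
  then show ?thesis unfolding supn_def using assms(3) by (rule cSUP_upper2) simp
qed

lemma supn_lt:
  assumes "T \<ge> 0" "continuous_on {0..T} g" "\<And>t. t \<in> {0..T} \<Longrightarrow> \<bar>g t\<bar> < B"
  shows "supn T g < B"
proof -
  have "continuous_on {0..T} (\<lambda>t. \<bar>g t\<bar>)" using assms(2) by (intro continuous_intros)
  then obtain x0 where x0: "x0 \<in> {0..T}" "\<forall>y\<in>{0..T}. \<bar>g y\<bar> \<le> \<bar>g x0\<bar>"
    using continuous_attains_sup[of "{0..T}" "\<lambda>t. \<bar>g t\<bar>"] assms(1) by auto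
  have "supn T g \<le> \<bar>g x0\<bar>" unfolding supn_def
    using x0 assms(1) by (intro cSUP_least) auto
  also have "\<dots> < B" using assms(3) x0 by auto
  finally show ?thesis .
qed

lemma mono_abs:
  fixes h :: "real \<Rightarrow> real"
  assumes "continuous_on {p..q} h" "inj_on h {p..q}" "p < x" "x < q"
  shows "\<bar>h x\<bar> < max \<bar>h p\<bar> \<bar>h q\<bar>"
  using continuous_inj_imp_mono[OF assms(3,4,1,2)] by auto

theorem lemma3p2:
  fixes T a M1 M2 lam :: real
    and \<phi> \<psi> :: "real \<Rightarrow> real"
    and f :: "real \<Rightarrow> real \<Rightarrow> real \<Rightarrow> real"
    and c u u' :: "real \<Rightarrow> real"
  assumes T: "T > 0" and a: "a > 0"
    and hom: "homeomorphism UNIV {-a<..<a} \<phi> \<psi>" and phi0: "\<phi> 0 = 0"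
    and fcont: "continuous_on ({0..T} \<times> UNIV \<times> UNIV) (\<lambda>(t, x, y). f t x y)"
    and H1_M: "M1 < M2"
    and H1_up: "\<And>v v'. is_C1 T v v' \<Longrightarrow> (\<forall>t\<in>{0..T}. v' t \<ge> M2) \<Longrightarrow>
                   integral {0..T} (\<lambda>t. f t (v t) (v' t)) \<noteq> 0"
    and H1_low: "\<And>v v'. is_C1 T v v' \<Longrightarrow> (\<forall>t\<in>{0..T}. v' t \<le> M1) \<Longrightarrow>
                   integral {0..T} (\<lambda>t. f t (v t) (v' t)) \<noteq> 0"
    and H2_c: "continuous_on {0..T} c"
    and H2_f: "\<And>t x y. t \<in> {0..T} \<Longrightarrow> f t x y \<ge> c t"
    and H2_a: "max \<bar>\<phi> M2\<bar> \<bar>\<phi> M1\<bar> + 2 * integral {0..T} (\<lambda>t. max (- c t) 0) < a"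
    and lam: "lam \<in> {0..1}"
    and u: "is_C1 T u u'"
    and Omega: "supn T (\<lambda>t. lam * Hop (\<lambda>s. Nf f u u' s - Qop T (Nf f u u') s) t + \<phi> (Pop u t)) < a"
    and fixpt: "\<forall>t\<in>{0..T}. u t = Pop u t + Qop T (Nf f u u') t
                 + Hop (\<lambda>s. \<psi> (lam * Hop (\<lambda>\<tau>. Nf f u u' \<tau> - Qop T (Nf f u u') \<tau>) s + \<phi> (Pop u s))) t"
  shows "supn T (\<lambda>t. lam * Hop (\<lambda>s. Nf f u u' s - Qop T (Nf f u u') s) t + \<phi> (Pop u t))
           < max \<bar>\<phi> M2\<bar> \<bar>\<phi> M1\<bar> + 2 * integral {0..T} (\<lambda>t. max (- c t) 0)
       \<and> supn T u + supn T u'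
           < max \<bar>\<psi> (max \<bar>\<phi> M2\<bar> \<bar>\<phi> M1\<bar> + 2 * integral {0..T} (\<lambda>t. max (- c t) 0))\<bar>
                 \<bar>\<psi> (- max \<bar>\<phi> M2\<bar> \<bar>\<phi> M1\<bar> - 2 * integral {0..T} (\<lambda>t. max (- c t) 0))\<bar> * (2 + T)"
  proof -
  define N where "N = (\<lambda>s. f s (u s) (u' s))"
  define C where "C = integral {0..T} (\<lambda>t. max (- c t) 0)"
  define L where "L = max \<bar>\<phi> M2\<bar> \<bar>\<phi> M1\<bar>"
  have NN: "Nf f u u' = N" by (auto simp: N_def Nf_def)
  have hom': "\<And>x. \<psi> (\<phi> x) = x" "\<And>y. y \<in> {-a<..<a} \<Longrightarrow> \<phi> (\<psi> y) = y"
    "continuous_on UNIV \<phi>" "continuous_on {-a<..<a} \<psi>" "\<phi> ` UNIV = {-a<..<a}"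
    "\<psi> ` {-a<..<a} = UNIV"
    using hom unfolding homeomorphism_def by auto
  have ucd: "\<And>t. t \<in> {0..T} \<Longrightarrow> (u has_real_derivative u' t) (at t within {0..T})"
    and u'c: "continuous_on {0..T} u'" using u unfolding is_C1_def by auto
  have uc: "continuous_on {0..T} u" using ucd by (rule DERIV_continuous_on)
  have Nc: "continuous_on {0..T} N"
    unfolding N_def
  proof (rule continuous_on_compose2[OF fcont, of "{0..T}" "\<lambda>t. (t, u t, u' t)", simplified])
    show "continuous_on {0..T} (\<lambda>t. (t, u t, u' t))" using uc u'c by (intro continuous_intros)
  qed auto
  have Nint: "N integrable_on {a'..b'}" if "{a'..b'} \<subseteq> {0..T}" for a' b'
    using integrable_continuous_real[OF continuous_on_subset[OF Nc that]] .
  have cc: "continuous_on {0..T} (\<lambda>t. max (- c t) 0)" using H2_c by (intro continuous_intros)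
  have cint: "(\<lambda>t. max (- c t) 0) integrable_on {a'..b'}" if "{a'..b'} \<subseteq> {0..T}" for a' b'
    using integrable_continuous_real[OF continuous_on_subset[OF cc that]] .
  have C0: "C \<ge> 0" unfolding C_def by (rule integral_nonneg[OF cint]) auto
  have L0: "L \<ge> 0" unfolding L_def by auto
  have H0: "Hop g 0 = 0" for g by (simp add: Hop_def)
  have "u 0 = u 0 + Qop T N 0" using fixpt[rule_format, of 0] T by (simp add: NN H0 Pop_def)
  then have intN: "integral {0..T} N = 0" using T by (simp add: Qop_def)
  have Q0: "Qop T N s = 0" for s by (simp add: Qop_def intN)
  define G where "G = (\<lambda>t. integral {0..t} N)"
  define w where "w = (\<lambda>t. lam * G t + \<phi> (u 0))"
  have wdef: "(\<lambda>t. lam * Hop (\<lambda>s. Nf f u u' s - Qop T (Nf f u u') s) t + \<phi> (Pop u t)) = w"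
    by (auto simp: w_def G_def NN Q0 Hop_def Pop_def)
  have Gc: "continuous_on {0..T} G" unfolding G_def
    by (rule continuous_on_eq_continuous_within[THEN iffD2]) 
       (auto intro!: has_vector_derivative_continuous integral_has_vector_derivative Nc)
  have wc: "continuous_on {0..T} w" unfolding w_def using Gc by (intro continuous_intros)
  have wa: "w t \<in> {-a<..<a}" if "t \<in> {0..T}" for t
  proof -
    have "\<bar>w t\<bar> \<le> supn T w" using supn_ge[OF _ wc that] T by simp
    then show ?thesis using Omega wdef by auto
  qed
  have pwc: "continuous_on {0..T} (\<lambda>t. \<psi> (w t))"
    by (rule continuous_on_compose2[OF hom'(4) wc]) (use wa in blast)
  have fix2: "u t = u 0 + integral {0..t} (\<lambda>s. \<psi> (w s))" if "t \<in> {0..T}" for t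
    using fixpt[rule_format, OF that] wdef Q0 unfolding NN
    by (simp add: Hop_def Pop_def w_def G_def Q0)
  have u'eq: "u' t = \<psi> (w t)" if t: "t \<in> {0..T}" for t
  proof -
    have d1: "((\<lambda>t. u 0 + integral {0..t} (\<lambda>s. \<psi> (w s))) has_real_derivative \<psi> (w t)) (at t within {0..T})"
      using DERIV_add[OF DERIV_const integral_has_real_derivative[OF pwc t]] by simp
    have d2: "((\<lambda>t. u 0 + integral {0..t} (\<lambda>s. \<psi> (w s))) has_real_derivative u' t) (at t within {0..T})"
      by (rule has_field_derivative_transform_within[OF ucd[OF t] zero_less_one t]) (erule fix2)
    have e1: "((\<lambda>t. u 0 + integral {0..t} (\<lambda>s. \<psi> (w s))) has_vector_derivative \<psi> (w t)) (at t within cbox 0 T)"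
      using d1 by (simp only: has_real_derivative_iff_has_vector_derivative cbox_interval)
    have e2: "((\<lambda>t. u 0 + integral {0..t} (\<lambda>s. \<psi> (w s))) has_vector_derivative u' t) (at t within cbox 0 T)"
      using d2 by (simp only: has_real_derivative_iff_has_vector_derivative cbox_interval)
    have tc: "t \<in> cbox 0 T" using t by (simp only: cbox_interval)
    show ?thesis by (rule vector_derivative_unique_within_closed_interval[OF T tc e2 e1])
  qed
  have phiu': "\<phi> (u' t) = w t" if "t \<in> {0..T}" for t
    using u'eq[OF that] hom'(2)[OF wa[OF that]] by simp
  have "\<phi> (u 0) = \<phi> (u' 0)" using phiu'[of 0] T by (simp add: w_def G_def)
  then have u00: "u 0 = u' 0" using hom'(1) by metis
  have intN': "integral {0..T} (\<lambda>t. f t (u t) (u' t)) = 0" using intN by (simp add: N_def)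
  obtain t1 where t1: "t1 \<in> {0..T}" "u' t1 < M2" using H1_up[OF u] intN' by force
  obtain t2 where t2: "t2 \<in> {0..T}" "u' t2 > M1" using H1_low[OF u] intN' by force
  obtain t0 where t0: "t0 \<in> {0..T}" "M1 < u' t0" "u' t0 < M2"
  proof -
    consider "u' t1 > M1" | "u' t2 < M2" | "u' t1 \<le> M1" "u' t2 \<ge> M2" by linarith
    then show ?thesis
    proof cases
      case 1 then show ?thesis using that t1 by auto
    next
      case 2 then show ?thesis using that t2 by auto
    next
      case 3
      define m where "m = (M1 + M2) / 2"
      have m: "M1 < m" "m < M2" using H1_M by (auto simp: m_def)
      have "\<exists>x. min t1 t2 \<le> x \<and> x \<le> max t1 t2 \<and> u' x = m"
      proof (cases "t1 \<le> t2")
        case True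
        then show ?thesis using IVT'[of u' t1 m t2] continuous_on_subset[OF u'c, of "{t1..t2}"] t1 t2 3 m
          by auto
      next
        case False
        then show ?thesis using IVT2'[of u' t1 m t2] continuous_on_subset[OF u'c, of "{t2..t1}"] t1 t2 3 m
          by auto
      qed
      then obtain x where x: "min t1 t2 \<le> x" "x \<le> max t1 t2" "u' x = m" by blast
      have x0: "x \<in> {0..T}" using x t1 t2 by (auto simp: min_def max_def split: if_splits)
      show ?thesis by (rule that[OF x0]) (use m x in auto)
    qed
  qed
  have phiinj: "inj_on \<phi> A" for A using hom'(1) by (metis inj_on_inverseI)
  have wt0: "\<bar>w t0\<bar> < L"
    using mono_abs[OF continuous_on_subset[OF hom'(3)] phiinj t0(2,3)] phiu'[OF t0(1)]
    by (auto simp: L_def)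
  have Gd: "G t - G s \<ge> - C" if "0 \<le> s" "s \<le> t" "t \<le> T" for s t
  proof -
    have "G t - G s = integral {s..t} N"
    proof -
      have "N integrable_on {0..t}" using that by (intro Nint) auto
      from Henstock_Kurzweil_Integration.integral_combine[OF that(1,2) this]
      show ?thesis by (simp add: G_def algebra_simps)
    qed
    also have "\<dots> \<ge> integral {s..t} (\<lambda>x. - max (- c x) 0)"
      using that by (intro integral_le Nint integrable_neg cint) (auto simp: N_def intro!: order.trans[OF _ H2_f])
    also have "integral {s..t} (\<lambda>x. - max (- c x) 0) = - integral {s..t} (\<lambda>x. max (- c x) 0)"
      by (rule integral_neg)
    also have "integral {s..t} (\<lambda>x. max (- c x) 0) \<le> C"
      unfolding C_def using that by (intro integral_subset_le cint) auto
    ultimately show ?thesis by linarith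
  qed
  have G0: "G 0 = 0" "G T = 0" using intN by (auto simp: G_def)
  have Gb: "\<bar>G t - G t0\<bar> \<le> 2 * C" if "t \<in> {0..T}" for t
  proof (cases "t0 \<le> t")
    case True
    then show ?thesis using Gd[of t0 t] Gd[of t T] Gd[of 0 t0] that t0 G0 by auto
  next
    case False
    then show ?thesis using Gd[of t t0] Gd[of t0 T] Gd[of 0 t] that t0 G0 by auto
  qed
  have wb: "\<bar>w t\<bar> < L + 2 * C" if "t \<in> {0..T}" for t
  proof -
    have "w t = w t0 + lam * (G t - G t0)" by (simp add: w_def algebra_simps)
    moreover have "\<bar>lam * (G t - G t0)\<bar> \<le> 2 * C"
    proof -
      have "\<bar>lam * (G t - G t0)\<bar> = lam * \<bar>G t - G t0\<bar>" using lam by (simp add: abs_mult)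
      also have "\<dots> \<le> 1 * (2 * C)" using lam Gb[OF that] C0 by (intro mult_mono) auto
      finally show ?thesis by simp
    qed
    ultimately show ?thesis using wt0 by linarith
  qed
  have part1: "supn T w < L + 2 * C" using supn_lt[OF _ wc wb] T by simp
  define B where "B = L + 2 * C"
  define r where "r = max \<bar>\<psi> B\<bar> \<bar>\<psi> (- B)\<bar>"
  have Ba: "B < a" using H2_a by (simp add: B_def L_def C_def)
  have u'b: "\<bar>\<psi> (w t)\<bar> < r" if "t \<in> {0..T}" for t
  proof -
    have wB: "- B < w t" "w t < B" using wb[OF that] by (auto simp: B_def)
    have sub: "{- B..B} \<subseteq> {-a<..<a}" using Ba wB by auto
    have "inj_on \<psi> {-a<..<a}" using hom'(2) by (metis inj_on_inverseI)
    then have "inj_on \<psi> {- B..B}" using sub by (rule inj_on_subset)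
    from mono_abs[OF continuous_on_subset[OF hom'(4) sub] this wB]
    show ?thesis by (auto simp: r_def)
  qed
  have s2: "supn T u' < r" using supn_lt[OF _ u'c, of r] T u'b u'eq by auto
  have ub: "\<bar>u t\<bar> < r * (1 + T)" if t: "t \<in> {0..T}" for t
  proof -
    have "\<bar>integral {0..t} (\<lambda>s. \<psi> (w s))\<bar> \<le> integral {0..t} (\<lambda>s. r)"
    proof -
      have i1: "(\<lambda>s. \<psi> (w s)) integrable_on {0..t}"
        using t by (intro integrable_continuous_real continuous_on_subset[OF pwc]) auto
      have i2: "(\<lambda>s. r) integrable_on {0..t}" by (rule integrable_const_ivl)
      have "norm (integral {0..t} (\<lambda>s. \<psi> (w s))) \<le> integral {0..t} (\<lambda>s. r)"
        by (rule integral_norm_bound_integral[OF i1 i2]) (use t u'b in \<open>auto intro!: less_imp_le\<close>)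
      then show ?thesis by simp
    qed
    also have "\<dots> = r * t" using t by simp
    also have "\<dots> \<le> r * T" using t u'b[OF t] by (intro mult_left_mono) auto
    finally have "\<bar>integral {0..t} (\<lambda>s. \<psi> (w s))\<bar> \<le> r * T" .
    moreover have "\<bar>u 0\<bar> < r" using u00 u'eq[of 0] u'b[of 0] T by auto
    ultimately show ?thesis using fix2[OF t] by (simp add: algebra_simps)
  qed
  have s1: "supn T u < r * (1 + T)" using supn_lt[OF _ uc ub] T by simp
  have rr: "max \<bar>\<psi> (L + 2 * C)\<bar> \<bar>\<psi> (- L - 2 * C)\<bar> = r" by (simp add: r_def B_def)
  have e: "r * (1 + T) + r = r * (2 + T)" by (simp add: algebra_simps)
  show ?thesis unfolding L_def[symmetric] C_def[symmetric] wdef rr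
    using part1 s1 s2 e by linarith
qed

end
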